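(* Consider the multicast coalitional game with player set $\mathcal{N}$ and value function $$v(S)=\sum_{i\in S}U_i-\sum_{i\in S}\frac{\alpha_i}{R_S}-\frac{\beta+\gamma}{R_S},\qquad R_S=\min_{i\in S}R_i,$$ for nonempty $S\subseteq\mathcal{N}$, with the convention $v(\emptyset)=0$. Let $\mathbf{P}=\{P_1,\dots,P_n\}$ be a partition of $\mathcal{N}$ into nonempty sets, with $R_{i,min}$, $R_{i,max}$ the minimum and maximum rates of users in $P_i$, ordered as $R_{1,min}\le R_{1,max}\le R_{2,min}\le\dots\le R_{n,min}\le R_{n,max}$. Let $\alpha_{min}=\min_{i\in\mathcal{N}}\alpha_i$. If $$\frac{R_{i+1,min}}{R_{i,max}}\ge\frac{\alpha_{min}+\beta+\gamma}{\alpha_{min}}\quad\forall i\in\{1,\dots,n-1\},$$ then for every $\mathbf{P}$-incompatible coalition $S$ (i.e. nonempty $S\subseteq\mathcal{N}$ with $S\not\subseteq P_i$ for all $i$), $$\sum_{i=1}^nv(S\cap P_i)\ge v(S).$$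
   Context: A transmitter multicasts a file of size $X>0$ bits to users $\mathcal{N}=\{1,\dots,N\}$. User $i$ has valuation $U_i\in\mathbb{R}$, downloads at rate $R_i>0$, and consumes receive power $P_{Rx,i}>0$; the transmitter transmits at power $P_{Tx}>0$. Costs per unit energy are $a>0$ at users and $b>0$ at the transmitter; bandwidth cost per second is $w>0$. Set $\alpha_i=aP_{Rx,i}X$, $\beta=bP_{Tx}X$, $\gamma=wX$. *)

theory Defs
  imports "HOL-Analysis.Analysis"
begin

definition coal_rate :: "(nat \<Rightarrow> real) \<Rightarrow> nat set \<Rightarrow> real" where
  "coal_rate R S = Min (R ` S)"

(* Value function of the multicast game; alpha i = a * PRx i * X,
   beta = b * PTx * X, gamma = w * X; v {} = 0 *)
definition mval :: "(nat \<Rightarrow> real) \<Rightarrow> (nat \<Rightarrow> real) \<Rightarrow> (nat \<Rightarrow> real) \<Rightarrow> real \<Rightarrow> real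
                    \<Rightarrow> nat set \<Rightarrow> real" where
  "mval U R alpha beta gamma S =
     (if S = {} then 0
      else (\<Sum>i\<in>S. U i) - (\<Sum>i\<in>S. alpha i / coal_rate R S) - (beta + gamma) / coal_rate R S)"

end

theory Submission
  imports Defs
begin

lemma my_Min_le_Max: "finite (A::real set) \<Longrightarrow> A \<noteq> {} \<Longrightarrow> Min A \<le> Max A"
  using Min_in Max_ge by blast

theorem lemma1:
  fixes N n :: nat
    and X PTx a b w :: real
    and U R PRx :: "nat \<Rightarrow> real"
    and P :: "nat \<Rightarrow> nat set"
    and S :: "nat set"
  assumes X_pos: "X > 0" and PTx_pos: "PTx > 0"
    and a_pos: "a > 0" and b_pos: "b > 0" and w_pos: "w > 0"
    and R_pos: "\<And>i. i \<in> {1..N} \<Longrightarrow> R i > 0"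
    and PRx_pos: "\<And>i. i \<in> {1..N} \<Longrightarrow> PRx i > 0"
    and P_nonempty: "\<And>i. i \<in> {1..n} \<Longrightarrow> P i \<noteq> {}"
    and P_disj: "\<And>i j. i \<in> {1..n} \<Longrightarrow> j \<in> {1..n} \<Longrightarrow> i \<noteq> j \<Longrightarrow> P i \<inter> P j = {}"
    and P_cover: "(\<Union>i\<in>{1..n}. P i) = {1..N}"
    and P_order: "\<And>i. i \<in> {1..n-1} \<Longrightarrow> Max (R ` P i) \<le> Min (R ` P (i+1))"
    and gap: "\<And>i. i \<in> {1..n-1} \<Longrightarrow>
        Min (R ` P (i+1)) / Max (R ` P i) \<ge>
        (Min ((\<lambda>j. a * PRx j * X) ` {1..N}) + b * PTx * X + w * X)
          / Min ((\<lambda>j. a * PRx j * X) ` {1..N})"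
    and S_nonempty: "S \<noteq> {}" and S_sub: "S \<subseteq> {1..N}"
    and S_incompat: "\<forall>i\<in>{1..n}. \<not> S \<subseteq> P i"
  shows "(\<Sum>i=1..n. mval U R (\<lambda>j. a * PRx j * X) (b * PTx * X) (w * X) (S \<inter> P i))
           \<ge> mval U R (\<lambda>j. a * PRx j * X) (b * PTx * X) (w * X) S"
proof -
  define al where "al = (\<lambda>j. a * PRx j * X)"
  define c where "c = b*PTx*X + w*X"
  define am where "am = Min (al ` {1..N})"
  define K where "K = {i\<in>{1..n}. S \<inter> P i \<noteq> {}}"
  define r where "r = (\<lambda>i. Min (R ` (S \<inter> P i)))"
  define A where "A = (\<lambda>i. \<Sum>j\<in>S \<inter> P i. al j)"
  define g where "g = (\<lambda>i. if S \<inter> P i = {} then 0 else (A i + c) / r i)"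
  have Psub: "\<And>i. i\<in>{1..n} \<Longrightarrow> P i \<subseteq> {1..N}" using P_cover by blast
  have Pfin: "\<And>i. i\<in>{1..n} \<Longrightarrow> finite (P i)" using Psub finite_subset by blast
  have Sfin: "finite S" using S_sub finite_subset by blast
  have c_pos: "c > 0" unfolding c_def using X_pos PTx_pos b_pos w_pos by (simp add: add_pos_pos)
  have al_pos: "\<And>j. j\<in>{1..N} \<Longrightarrow> al j > 0" unfolding al_def using a_pos PRx_pos X_pos by simp
  have N_ne: "{1..N} \<noteq> {}" using S_nonempty S_sub by blast
  have al_nn: "\<And>x. x\<in>S \<Longrightarrow> 0 \<le> al x" using al_pos S_sub by (meson less_imp_le subsetD)
  have am_pos: "am > 0" unfolding am_def using N_ne al_pos by (simp add: Min_gr_iff)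
  have am_le: "\<And>j. j\<in>{1..N} \<Longrightarrow> am \<le> al j" unfolding am_def by simp
  have S_split: "S = (\<Union>i\<in>{1..n}. S \<inter> P i)" using S_sub P_cover by blast
  have sum_split: "sum f S = (\<Sum>i=1..n. sum f (S \<inter> P i))" for f :: "nat \<Rightarrow> real"
  proof -
    have "sum f S = sum f (\<Union>i\<in>{1..n}. S \<inter> P i)" using S_split by simp
    also have "\<dots> = (\<Sum>i=1..n. sum f (S \<inter> P i))"
    proof (rule sum.UNION_disjoint)
      show "finite {1..n}" by simp
      show "\<forall>i\<in>{1..n}. finite (S \<inter> P i)" using Sfin by simp
      show "\<forall>i\<in>{1..n}. \<forall>j\<in>{1..n}. i \<noteq> j \<longrightarrow> S \<inter> P i \<inter> (S \<inter> P j) = {}"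
        using P_disj by blast
    qed
    finally show ?thesis .
  qed
  have Kfin: "finite K" unfolding K_def by simp
  have Kne: "K \<noteq> {}"
  proof -
    obtain j where "j \<in> S" using S_nonempty by blast
    then obtain i where "i\<in>{1..n}" "j \<in> P i" using S_split by blast
    then show ?thesis unfolding K_def using \<open>j\<in>S\<close> by blast
  qed
  define k1 where "k1 = Min K"
  have k1K: "k1 \<in> K" unfolding k1_def using Kfin Kne by simp
  have k1_le: "\<And>i. i\<in>K \<Longrightarrow> k1 \<le> i" unfolding k1_def using Kfin by simp
  have k1n: "k1 \<in> {1..n}" using k1K K_def by simp
  have r_pos: "r i > 0" if "i \<in> K" for i
  proof -
    have "i \<in> {1..n}" "S \<inter> P i \<noteq> {}" using that K_def by auto
    then show ?thesis unfolding r_def using Sfin S_sub R_pos by (auto simp: Min_gr_iff)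
  qed
  have rS_pos: "Min (R ` S) > 0" using Sfin S_nonempty S_sub R_pos by (auto simp: Min_gr_iff)
  have rS_le: "Min (R ` S) \<le> r k1"
  proof -
    have "S \<inter> P k1 \<noteq> {}" using k1K K_def by simp
    then show ?thesis unfolding r_def using Sfin by (intro Min_antimono) auto
  qed
  have MinMax: "Min (R ` P m) \<le> Max (R ` P m)" if "m \<in> {1..n}" for m
    using Pfin[OF that] P_nonempty[OF that] by (simp add: my_Min_le_Max)
  have chain: "k1 < m \<Longrightarrow> m \<le> n \<Longrightarrow> Min (R ` P (k1+1)) \<le> Min (R ` P m)" for m
  proof (induction m)
    case 0 then show ?case by simp
  next
    case (Suc m)
    show ?case
    proof (cases "m = k1")
      case True then show ?thesis by simp
    next
      case False
      then have h: "k1 < m" "m \<le> n" using Suc.prems by auto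
      have m1: "m \<in> {1..n}" "m \<in> {1..n-1}" using h k1n Suc.prems by auto
      have "Min (R ` P (k1+1)) \<le> Min (R ` P m)" using Suc.IH h by simp
      also have "\<dots> \<le> Max (R ` P m)" using MinMax m1 by simp
      also have "\<dots> \<le> Min (R ` P (m+1))" using P_order m1 by simp
      finally show ?thesis by simp
    qed
  qed
  have key: "(A i + c) / r i \<le> A i / r k1" if iK: "i \<in> K" and ik: "i \<noteq> k1" for i
  proof -
    have i1: "i \<in> {1..n}" and ne: "S \<inter> P i \<noteq> {}" using iK K_def by auto
    have lt: "k1 < i" using k1_le iK ik by fastforce
    have k1m: "k1 \<in> {1..n-1}" using lt i1 k1n by auto
    have rk1: "r k1 \<le> Max (R ` P k1)"
    proof -
      have ne1: "S \<inter> P k1 \<noteq> {}" using k1K K_def by simp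
      have "r k1 \<le> Max (R ` (S \<inter> P k1))" unfolding r_def using Sfin ne1 by (simp add: my_Min_le_Max)
      also have "\<dots> \<le> Max (R ` P k1)" using Pfin[OF k1n] ne1 by (intro Max_mono) auto
      finally show ?thesis .
    qed
    have ri: "Min (R ` P i) \<le> r i"
      unfolding r_def using Pfin[OF i1] ne by (intro Min_antimono) auto
    have ch: "Min (R ` P (k1+1)) \<le> Min (R ` P i)" using chain lt i1 by simp
    have rk1p: "r k1 > 0" using r_pos k1K by simp
    have rip: "r i > 0" using r_pos iK by simp
    have Mpos: "Max (R ` P k1) > 0" using rk1 rk1p by simp
    obtain j where j: "j \<in> S \<inter> P i" using ne by blast
    have jN: "j \<in> {1..N}" using j S_sub by blast
    have Aj: "al j \<le> A i" unfolding A_def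
      using Sfin j al_nn by (intro member_le_sum) auto
    have Ai: "A i \<ge> am" using Aj am_le[OF jN] by simp
    have Aipos: "A i > 0" using Ai am_pos by simp
    have g: "(am + c) / am \<le> Min (R ` P (k1+1)) / Max (R ` P k1)"
      using gap[OF k1m] unfolding am_def c_def al_def by (simp add: add.assoc)
    have "(A i + c) / A i \<le> (am + c) / am"
      using Ai am_pos c_pos by (simp add: field_simps mult_left_mono)
    also have "\<dots> \<le> Min (R ` P (k1+1)) / Max (R ` P k1)" by (rule g)
    also have "\<dots> \<le> r i / r k1"
      using ch ri rk1 rk1p rip by (intro frac_le) auto
    finally have "(A i + c) / A i \<le> r i / r k1" .
    then have "(A i + c) * r k1 \<le> r i * A i" using Aipos rk1p by (simp add: field_simps)
    then show ?thesis using rip rk1p by (simp add: field_simps)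
  qed
  have A_nn: "A i \<ge> 0" for i unfolding A_def using al_nn by (intro sum_nonneg) auto
  have gle: "g i \<le> A i / r k1" if "i \<in> {1..n} - {k1}" for i
  proof (cases "S \<inter> P i = {}")
    case True then show ?thesis unfolding g_def A_def by simp
  next
    case False
    then have "i \<in> K" using that K_def by auto
    then show ?thesis unfolding g_def using False key that by auto
  qed
  have gk1: "g k1 = (A k1 + c) / r k1" unfolding g_def using k1K K_def by simp
  have "(\<Sum>i=1..n. g i) = g k1 + (\<Sum>i\<in>{1..n}-{k1}. g i)"
    using k1n by (simp add: sum.remove)
  also have "\<dots> \<le> (A k1 + c) / r k1 + (\<Sum>i\<in>{1..n}-{k1}. A i / r k1)"
    using gk1 gle sum_mono[of "{1..n}-{k1}" g "\<lambda>i. A i / r k1"] by simp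
  also have "\<dots> = ((\<Sum>i=1..n. A i) + c) / r k1"
    using k1n by (simp add: sum.remove sum_divide_distrib[symmetric] add_divide_distrib)
  also have "\<dots> \<le> ((\<Sum>i=1..n. A i) + c) / Min (R ` S)"
  proof (rule divide_left_mono)
    have "0 \<le> (\<Sum>i=1..n. A i)" using A_nn by (simp add: sum_nonneg)
    then show "0 \<le> (\<Sum>i=1..n. A i) + c" using c_pos by simp
    show "Min (R ` S) \<le> r k1" by (rule rS_le)
    show "0 < r k1 * Min (R ` S)" using rS_pos rS_le by simp
  qed
  finally have main: "(\<Sum>i=1..n. g i) \<le> ((\<Sum>i=1..n. A i) + c) / Min (R ` S)" .
  have lhs: "mval U R al (b * PTx * X) (w * X) (S \<inter> P i) = sum U (S \<inter> P i) - g i" for i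
    unfolding mval_def g_def A_def r_def coal_rate_def c_def
    by (simp add: sum_divide_distrib[symmetric] diff_divide_distrib add_divide_distrib)
  have rhs: "mval U R al (b * PTx * X) (w * X) S = sum U S - ((\<Sum>i=1..n. A i) + c) / Min (R ` S)"
    unfolding mval_def A_def coal_rate_def c_def using S_nonempty sum_split
    by (simp add: sum_divide_distrib[symmetric] add_divide_distrib)
  have "mval U R al (b * PTx * X) (w * X) S \<le> (\<Sum>i=1..n. mval U R al (b * PTx * X) (w * X) (S \<inter> P i))"
    unfolding lhs rhs using main sum_split[of U] by (simp add: sum_subtractf)
  then show ?thesis unfolding al_def .
qed

end
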